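(* Let $\mathcal H=\{H_1,\dots,H_n\}$ be oriented affine hyperplanes in $\mathbb R^d$ such that $(\mathcal H,\mathbb R^d)$ has generic intersections, i.e. for every $\sigma\subseteq[n]$ with $\bigcap_{i\in\sigma}H_i\neq\emptyset$ one has $\dim\bigcap_{i\in\sigma}H_i=d-|\sigma|$. Then $\Gamma(\mathrm{code}(\mathcal H,\mathbb R^d))$ is shellable.
   Context: $H_i=\{x:w_i\cdot x-h_i=0\}$ with $w_i\ne0$ and $H_i^+=\{w_i\cdot x-h_i>0\}$. $\mathrm{code}(\mathcal H,\mathbb R^d)$ is the set of $\sigma\subseteq[n]$ such that $\bigl(\bigcap_{i\in\sigma}H_i^+\bigr)\setminus\bigcup_{j\notin\sigma}H_j^+\neq\emptyset$ (the empty intersection being $\mathbb R^d$). The polar complex $\Gamma(\mathcal C)$ is the simplicial complex on $[n]\sqcup\{\bar1,\dots,\bar n\}$ consisting of all subsets of the sets $\sigma\sqcup\{\bar i:i\in[n]\setminus\sigma\}$, $\sigma\in\mathcal C$; it is pure of dimension $n-1$. A pure $k$-dimensional complex is shellable if its facets admit an ordering $F_1,\dots,F_t$ such that for each $i>1$, the complex of all subsets of $F_i$ intersected with the complex of all subsets of $F_1,\dots,F_{i-1}$ is pure of dimension $k-1$. *)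

theory Defs
  imports "HOL-Analysis.Analysis"
begin

text \<open>Oriented affine hyperplanes in R^d (R^d = a euclidean_space of dimension d), indexed by
  [n] = {1..n}: H_i = {x. w i \<bullet> x - h i = 0}, positive open half-space H_i^+.\<close>

definition hyp :: "(nat \<Rightarrow> 'a::euclidean_space) \<Rightarrow> (nat \<Rightarrow> real) \<Rightarrow> nat \<Rightarrow> 'a set" where
  "hyp w h i = {x. w i \<bullet> x - h i = 0}"

definition hyp_pos :: "(nat \<Rightarrow> 'a::euclidean_space) \<Rightarrow> (nat \<Rightarrow> real) \<Rightarrow> nat \<Rightarrow> 'a set" where
  "hyp_pos w h i = {x. w i \<bullet> x - h i > 0}"

definition generic_intersections :: "nat \<Rightarrow> (nat \<Rightarrow> 'a::euclidean_space) \<Rightarrow> (nat \<Rightarrow> real) \<Rightarrow> bool" where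
  "generic_intersections n w h \<longleftrightarrow>
     (\<forall>\<sigma> \<subseteq> {1..n}. (\<Inter>i\<in>\<sigma>. hyp w h i) \<noteq> {} \<longrightarrow>
        aff_dim (\<Inter>i\<in>\<sigma>. hyp w h i) = int DIM('a) - int (card \<sigma>))"

text \<open>code(H, R^d); an empty intersection is UNIV.\<close>
definition hcode :: "nat \<Rightarrow> (nat \<Rightarrow> 'a::euclidean_space) \<Rightarrow> (nat \<Rightarrow> real) \<Rightarrow> nat set set" where
  "hcode n w h = {\<sigma>. \<sigma> \<subseteq> {1..n} \<and>
     (\<Inter>i\<in>\<sigma>. hyp_pos w h i) - (\<Union>j\<in>{1..n} - \<sigma>. hyp_pos w h j) \<noteq> {}}"

text \<open>Polar complex on vertex set [n] \<sqcup> {bar 1..bar n}, with i encoded as Inl i and bar i as Inr i.\<close>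
definition polar_facet :: "nat \<Rightarrow> nat set \<Rightarrow> (nat + nat) set" where
  "polar_facet n \<sigma> = Inl ` \<sigma> \<union> Inr ` ({1..n} - \<sigma>)"

definition polar_complex :: "nat \<Rightarrow> nat set set \<Rightarrow> (nat + nat) set set" where
  "polar_complex n C = {F. \<exists>\<sigma>\<in>C. F \<subseteq> polar_facet n \<sigma>}"

text \<open>Simplicial complexes as sets of (finite) faces.\<close>
definition facets :: "'v set set \<Rightarrow> 'v set set" where
  "facets K = {F \<in> K. \<forall>G\<in>K. F \<subseteq> G \<longrightarrow> G = F}"

text \<open>pure_dim K k: K is pure of dimension k, i.e. K is nonempty, every face lies in a facet and
  every facet has k+1 elements (k is an integer; dimension -1 means K = {{}}).\<close>
definition pure_dim :: "'v set set \<Rightarrow> int \<Rightarrow> bool" where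
  "pure_dim K k \<longleftrightarrow> K \<noteq> {} \<and> (\<forall>F\<in>K. \<exists>G\<in>facets K. F \<subseteq> G)
      \<and> (\<forall>F\<in>facets K. int (card F) = k + 1)"

definition shellable :: "'v set set \<Rightarrow> bool" where
  "shellable K \<longleftrightarrow> (\<exists>k. pure_dim K k \<and>
     (\<exists>fs. distinct fs \<and> set fs = facets K \<and>
        (\<forall>i. 0 < i \<and> i < length fs \<longrightarrow>
           pure_dim (Pow (fs ! i) \<inter> (\<Union>j<i. Pow (fs ! j))) (k - 1))))"

end

theory Submission
  imports Defs
begin


definition vx :: "nat set \<Rightarrow> nat \<Rightarrow> nat + nat" where
  "vx \<sigma> e = (if e \<in> \<sigma> then Inl e else Inr e)"

definition flp :: "nat \<Rightarrow> nat set \<Rightarrow> nat set" where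
  "flp e \<sigma> = (if e \<in> \<sigma> then \<sigma> - {e} else insert e \<sigma>)"

lemma pf_card: "\<sigma> \<subseteq> {1..n} \<Longrightarrow> card (polar_facet n \<sigma>) = n"
proof -
  assume s: "\<sigma> \<subseteq> {1..n}"
  have fin: "finite \<sigma>" using s finite_subset by blast
  have "card (polar_facet n \<sigma>) = card (Inl ` \<sigma> :: (nat+nat) set) + card (Inr ` ({1..n} - \<sigma>) :: (nat+nat) set)"
    unfolding polar_facet_def by (rule card_Un_disjoint) (use fin in auto)
  also have "\<dots> = card \<sigma> + card ({1..n} - \<sigma>)"
    by (simp add: card_image)
  also have "\<dots> = n"
  proof -
    have "card \<sigma> \<le> n" using card_mono[OF _ s] by simp
    then show ?thesis using s fin by (simp add: card_Diff_subset)
  qed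
  finally show ?thesis .
qed

lemma pf_sub_eq:
  assumes "\<sigma> \<subseteq> {1..n}" "\<tau> \<subseteq> {1..n}" "polar_facet n \<sigma> \<subseteq> polar_facet n \<tau>"
  shows "\<sigma> = \<tau>"
proof -
  have "\<sigma> \<subseteq> \<tau>" using assms(3) by (auto simp: polar_facet_def)
  moreover have "\<tau> \<subseteq> \<sigma>"
  proof
    fix x assume "x \<in> \<tau>"
    show "x \<in> \<sigma>"
    proof (rule ccontr)
      assume "x \<notin> \<sigma>"
      then have "Inr x \<in> polar_facet n \<sigma>" using \<open>x \<in> \<tau>\<close> assms(2) by (auto simp: polar_facet_def)
      then have "Inr x \<in> polar_facet n \<tau>" using assms(3) by blast
      then show False using \<open>x \<in> \<tau>\<close> by (auto simp: polar_facet_def)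
    qed
  qed
  ultimately show ?thesis by blast
qed

lemma pf_flip:
  assumes "e \<in> {1..n}"
  shows "polar_facet n \<sigma> \<inter> polar_facet n (flp e \<sigma>) = polar_facet n \<sigma> - {vx \<sigma> e}"
  using assms by (auto simp: polar_facet_def flp_def vx_def)

lemma pf_vx: "e \<in> {1..n} \<Longrightarrow> vx \<sigma> e \<in> polar_facet n \<sigma>"
  by (auto simp: polar_facet_def vx_def)

lemma pf_int:
  assumes "e \<in> \<sigma> \<longleftrightarrow> e \<notin> \<tau>"
  shows "vx \<sigma> e \<notin> polar_facet n \<tau>"
  using assms by (auto simp: polar_facet_def vx_def)

lemma facets_pc:
  assumes C: "C \<subseteq> Pow {1..n}"
  shows "facets (polar_complex n C) = polar_facet n ` C"
proof (rule set_eqI, rule iffI)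
  fix F assume "F \<in> facets (polar_complex n C)"
  then have F: "F \<in> polar_complex n C" "\<forall>G\<in>polar_complex n C. F \<subseteq> G \<longrightarrow> G = F"
    by (auto simp: facets_def)
  then obtain \<sigma> where "\<sigma> \<in> C" "F \<subseteq> polar_facet n \<sigma>" by (auto simp: polar_complex_def)
  moreover have "polar_facet n \<sigma> \<in> polar_complex n C" using \<open>\<sigma> \<in> C\<close> by (auto simp: polar_complex_def)
  ultimately show "F \<in> polar_facet n ` C" using F(2) by auto
next
  fix F assume "F \<in> polar_facet n ` C"
  then obtain \<sigma> where s: "\<sigma> \<in> C" "F = polar_facet n \<sigma>" by blast
  have "F \<in> polar_complex n C" using s by (auto simp: polar_complex_def)
  moreover have "G = F" if G: "G \<in> polar_complex n C" and FG: "F \<subseteq> G" for G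
  proof -
    obtain \<tau> where t: "\<tau> \<in> C" "G \<subseteq> polar_facet n \<tau>" using G unfolding polar_complex_def by blast
    have "\<sigma> = \<tau>" using pf_sub_eq[of \<sigma> n \<tau>] s t C FG by blast
    then show ?thesis using s t FG by blast
  qed
  ultimately show "F \<in> facets (polar_complex n C)" by (auto simp: facets_def)
qed

lemma shell_comb:
  assumes C: "C \<subseteq> Pow {1..n}" and ne: "C \<noteq> {}" and dys: "distinct ys" and sys: "set ys = C"
    and H: "\<And>i j. j < i \<Longrightarrow> i < length ys \<Longrightarrow>
              \<exists>k<i. \<exists>e. ys ! k = flp e (ys ! i) \<and> (e \<in> ys ! i \<longleftrightarrow> e \<notin> ys ! j)"
  shows "shellable (polar_complex n C)"
proof -
  let ?K = "polar_complex n C"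
  have fK: "facets ?K = polar_facet n ` C" by (rule facets_pc[OF C])
  have sub: "\<And>\<sigma>. \<sigma> \<in> C \<Longrightarrow> \<sigma> \<subseteq> {1..n}" using C by blast
  have pure: "pure_dim ?K (int n - 1)"
    unfolding pure_dim_def
  proof (intro conjI ballI)
    show "?K \<noteq> {}" using ne by (auto simp: polar_complex_def)
  next
    fix F assume "F \<in> ?K"
    then show "\<exists>G\<in>facets ?K. F \<subseteq> G" unfolding fK by (auto simp: polar_complex_def)
  next
    fix F assume "F \<in> facets ?K"
    then show "int (card F) = int n - 1 + 1" unfolding fK using pf_card sub by auto
  qed
  define fs where "fs = map (polar_facet n) ys"
  have inj: "inj_on (polar_facet n) C"
    by (rule inj_onI) (metis pf_sub_eq sub order_refl)
  have dfs: "distinct fs" unfolding fs_def using dys inj sys by (simp add: distinct_map)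
  have sfs: "set fs = facets ?K" unfolding fs_def fK using sys by simp
  have len: "length fs = length ys" by (simp add: fs_def)
  have ysC: "\<And>i. i < length ys \<Longrightarrow> ys ! i \<in> C" using sys nth_mem by blast
  have step: "pure_dim (Pow (fs ! i) \<inter> (\<Union>j<i. Pow (fs ! j))) (int n - 1 - 1)"
    if i: "0 < i" "i < length fs" for i
  proof -
    let ?L = "Pow (fs ! i) \<inter> (\<Union>j<i. Pow (fs ! j))"
    have il: "i < length ys" using i len by simp
    have fsi: "\<And>j. j < length ys \<Longrightarrow> fs ! j = polar_facet n (ys ! j)" by (simp add: fs_def)
    have cover: "\<exists>k<i. \<exists>e. e \<in> {1..n} \<and> ys ! k = flp e (ys ! i) \<and> X \<subseteq> fs ! i - {vx (ys ! i) e}"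
      if X: "X \<in> ?L" for X
    proof -
      obtain j where j: "j < i" "X \<subseteq> fs ! i" "X \<subseteq> fs ! j" using X by auto
      obtain k e where k: "k < i" "ys ! k = flp e (ys ! i)" "e \<in> ys ! i \<longleftrightarrow> e \<notin> ys ! j"
        using H[OF j(1) il] by blast
      have e: "e \<in> {1..n}" using k(3) sub ysC il j(1) by (metis UnCI UnE le_iff_sup less_trans)
      have "vx (ys ! i) e \<notin> fs ! j" using pf_int[OF k(3)] fsi j(1) il by simp
      then show ?thesis using k e j by blast
    qed
    have good: "fs ! i - {vx (ys ! i) e} \<in> facets ?L \<and> card (fs ! i - {vx (ys ! i) e}) = n - 1 \<and> n \<ge> 1"
      if k: "k < i" "e \<in> {1..n}" "ys ! k = flp e (ys ! i)" for k e
    proof -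
      have int: "fs ! i \<inter> fs ! k = fs ! i - {vx (ys ! i) e}"
        using pf_flip[OF k(2)] fsi il k by simp
      have mem: "fs ! i - {vx (ys ! i) e} \<in> ?L" using int[symmetric] k(1) by blast
      have vin: "vx (ys ! i) e \<in> fs ! i" using pf_vx[OF k(2)] fsi il by simp
      have max: "Y = fs ! i - {vx (ys ! i) e}" if Y: "Y \<in> ?L" "fs ! i - {vx (ys ! i) e} \<subseteq> Y" for Y
      proof (rule ccontr)
        assume "Y \<noteq> fs ! i - {vx (ys ! i) e}"
        moreover have "Y \<subseteq> fs ! i" using Y by blast
        ultimately have "Y = fs ! i" using Y(2) vin by blast
        then obtain j where j: "j < i" "fs ! i \<subseteq> fs ! j" using Y by auto
        then have "ys ! i = ys ! j" using pf_sub_eq[of "ys ! i" n "ys ! j"] fsi il sub ysC by simp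
        then show False using dys j(1) il nth_eq_iff_index_eq by fastforce
      qed
      have ci: "card (fs ! i) = n" using pf_card sub ysC il fsi by simp
      have "finite (ys ! i)" using sub ysC il finite_subset by (metis finite_atLeastAtMost)
      then have fin: "finite (fs ! i)" using fsi il by (simp add: polar_facet_def)
      have "card (fs ! i - {vx (ys ! i) e}) = n - 1" using ci vin fin by simp
      moreover have "n \<ge> 1" using ci vin fin by (metis card_0_eq empty_iff less_one not_le)
      ultimately show ?thesis using mem max by (auto simp: facets_def)
    qed
    show ?thesis unfolding pure_dim_def
    proof (intro conjI ballI)
      have "{} \<in> ?L" using i by auto
      then show "?L \<noteq> {}" by blast
    next
      fix X assume "X \<in> ?L"
      then obtain k e where "k < i" "e \<in> {1..n}" "ys ! k = flp e (ys ! i)" "X \<subseteq> fs ! i - {vx (ys ! i) e}"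
        using cover by blast
      then show "\<exists>G\<in>facets ?L. X \<subseteq> G" using good by blast
    next
      fix F assume F: "F \<in> facets ?L"
      then have FL: "F \<in> ?L" and Fm: "\<forall>G\<in>?L. F \<subseteq> G \<longrightarrow> G = F" by (auto simp: facets_def)
      obtain k e where ke: "k < i" "e \<in> {1..n}" "ys ! k = flp e (ys ! i)" "F \<subseteq> fs ! i - {vx (ys ! i) e}"
        using cover[OF FL] by blast
      have g: "fs ! i - {vx (ys ! i) e} \<in> facets ?L" "card (fs ! i - {vx (ys ! i) e}) = n - 1" "n \<ge> 1"
        using good[OF ke(1-3)] by auto
      have "fs ! i - {vx (ys ! i) e} = F" using Fm g(1) ke(4) by (auto simp: facets_def)
      then show "int (card F) = int n - 1 - 1 + 1" using g by simp
    qed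
  qed
  show ?thesis unfolding shellable_def
    using pure dfs sfs step by blast
qed



lemma dual_vec:
  fixes v :: "nat \<Rightarrow> 'a::euclidean_space"
  assumes "independent (v ` A)" "inj_on v A" "f \<in> A"
  shows "\<exists>u. v f \<bullet> u = 1 \<and> (\<forall>g\<in>A-{f}. v g \<bullet> u = 0)"
proof -
  obtain y z where y: "y \<in> span (v ` (A-{f}))"
    and z: "\<And>x. x \<in> span (v ` (A-{f})) \<Longrightarrow> orthogonal z x" and e: "v f = y + z"
    using orthogonal_subspace_decomp_exists[of "v ` (A-{f})" "v f"] by metis
  have im: "v ` (A-{f}) = v ` A - {v f}" using assms(2,3) by (auto simp: inj_on_def)
  have "z \<noteq> 0"
  proof
    assume "z = 0"
    then have "v f \<in> span (v ` A - {v f})" using e y im by simp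
    then show False using assms(1,3) dependent_def by blast
  qed
  then have zz: "z \<bullet> z > 0" by simp
  have yz: "y \<bullet> z = 0" using z[OF y] by (simp add: orthogonal_def inner_commute)
  define u where "u = z /\<^sub>R (z \<bullet> z)"
  have "v f \<bullet> u = 1" using zz yz by (simp add: u_def e inner_add_left)
  moreover have "v g \<bullet> u = 0" if "g \<in> A - {f}" for g
  proof -
    have "v g \<in> span (v ` (A-{f}))" using that by (simp add: span_base)
    then have "z \<bullet> v g = 0" using z orthogonal_def by blast
    then show ?thesis by (simp add: u_def inner_commute)
  qed
  ultimately show ?thesis by blast
qed

lemma generic_indep:
  fixes w :: "nat \<Rightarrow> 'a::euclidean_space"
  assumes gen: "generic_intersections n w h" and A: "A \<subseteq> {1..n}"
    and p: "\<forall>g\<in>A. w g \<bullet> p = h g"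
  shows "independent (w ` A) \<and> inj_on w A"
proof -
  have fA: "finite A" using A finite_subset by blast
  define S where "S = {y. \<forall>x\<in>span (w ` A). orthogonal x y}"
  have I: "(\<Inter>i\<in>A. hyp w h i) = (+) p ` S"
  proof (rule set_eqI, rule iffI)
    fix x assume "x \<in> (\<Inter>i\<in>A. hyp w h i)"
    then have xa: "\<forall>g\<in>A. w g \<bullet> (x - p) = 0" using p by (auto simp: hyp_def inner_diff_right)
    have "x - p \<in> S" unfolding S_def
    proof (intro CollectI ballI)
      fix a assume "a \<in> span (w ` A)"
      then show "orthogonal a (x - p)"
        by (rule span_induct) (auto simp: xa orthogonal_def inner_add_left subspace_def)
    qed
    then show "x \<in> (+) p ` S" by (metis add.commute diff_add_cancel image_eqI)
  next
    fix x assume "x \<in> (+) p ` S"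
    then obtain y where "y \<in> S" "x = p + y" by auto
    then have "\<forall>g\<in>A. w g \<bullet> y = 0" unfolding S_def by (auto simp: orthogonal_def span_base)
    then show "x \<in> (\<Inter>i\<in>A. hyp w h i)" using p \<open>x = p + y\<close> by (auto simp: hyp_def inner_add_right)
  qed
  have "p \<in> (\<Inter>i\<in>A. hyp w h i)" using p by (auto simp: hyp_def)
  then have ad: "aff_dim ((+) p ` S) = int DIM('a) - int (card A)"
    using gen A I unfolding generic_intersections_def by auto
  have sS: "subspace S" unfolding S_def by (rule subspace_orthogonal_to_vectors)
  have "dim S + dim (span (w ` A)) = DIM('a)"
    using dim_subspace_orthogonal_to_vectors[of "span (w ` A)" UNIV]
    by (simp add: S_def)
  moreover have "aff_dim ((+) p ` S) = int (dim S)"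
    by (simp add: aff_dim_translation_eq aff_dim_subspace sS)
  ultimately have dA: "dim (w ` A) = card A" using ad by simp
  have c1: "dim (w ` A) \<le> card (w ` A)" using fA by (simp add: dim_le_card span_superset)
  have c2: "card (w ` A) \<le> card A" using fA by (rule card_image_le)
  have cw: "card (w ` A) = card A" using c1 c2 dA by linarith
  then have inj: "inj_on w A" using fA by (simp add: inj_on_iff_eq_card)
  have "independent (w ` A)"
    using card_eq_dim[of "w ` A" "w ` A"] cw dA fA by (simp add: span_superset)
  with inj show ?thesis by blast
qed



lemma fo_limit:
  fixes a c :: real
  assumes "eventually (\<lambda>t. 0 \<le> 2*t*a + t^2*c) (at_right 0)"
  shows "0 \<le> a"
proof -
  have "eventually (\<lambda>t. 0 \<le> 2*a + t*c) (at_right (0::real))"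
    using assms eventually_at_right_less[of "0::real"]
  proof (eventually_elim)
    case (elim t)
    have "0 \<le> t * (2*a + t*c)" using elim by (simp add: algebra_simps power2_eq_square)
    then show ?case using elim by (simp add: zero_le_mult_iff)
  qed
  moreover have "((\<lambda>t. 2*a + t*c) \<longlongrightarrow> 2*a + 0*c) (at_right (0::real))"
    by (intro tendsto_intros)
  ultimately have "0 \<le> 2*a + 0*c"
    using tendsto_lowerbound by (metis trivial_limit_at_right_real)
  then show ?thesis by simp
qed

lemma lin_limit:
  fixes a c :: real
  assumes "\<And>e. e > 0 \<Longrightarrow> 0 \<le> a + e * c"
  shows "0 \<le> a"
proof (rule ccontr)
  assume "\<not> 0 \<le> a"
  then have a: "a < 0" by simp
  define e where "e = - a / (2 * (\<bar>c\<bar> + 1))"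
  have e: "e > 0" unfolding e_def by (rule divide_pos_pos) (use a in auto)
  have "e * c \<le> e * \<bar>c\<bar>" using e by (simp add: mult_left_mono)
  also have "\<dots> < e * (\<bar>c\<bar> + 1)" using e by simp
  also have "\<dots> = - a / 2" unfolding e_def by (simp add: field_simps)
  finally have "a + e * c < a / 2" by simp
  then show False using assms[OF e] a by simp
qed

locale arr =
  fixes n :: nat and w :: "nat \<Rightarrow> 'a::euclidean_space" and h :: "nat \<Rightarrow> real"
  assumes gen: "generic_intersections n w h"
begin

definition sg :: "'a \<Rightarrow> nat set" where "sg x = {i\<in>{1..n}. w i \<bullet> x > h i}"
definition cell :: "nat set \<Rightarrow> 'a set" where "cell \<sigma> = {x. sg x = \<sigma>}"
definition D :: "nat set \<Rightarrow> real" where "D \<sigma> = infdist 0 (cell \<sigma>)"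

lemma hcode_eq: "hcode n w h = range sg"
proof (rule set_eqI, rule iffI)
  fix \<sigma> assume "\<sigma> \<in> hcode n w h"
  then obtain x where "\<sigma> \<subseteq> {1..n}" "x \<in> (\<Inter>i\<in>\<sigma>. hyp_pos w h i)" "x \<notin> (\<Union>j\<in>{1..n} - \<sigma>. hyp_pos w h j)"
    unfolding hcode_def by blast
  then have "sg x = \<sigma>" by (auto simp: sg_def hyp_pos_def)
  then show "\<sigma> \<in> range sg" by blast
next
  fix \<sigma> assume "\<sigma> \<in> range sg"
  then obtain x where "sg x = \<sigma>" by blast
  then have "\<sigma> \<subseteq> {1..n}" "x \<in> (\<Inter>i\<in>\<sigma>. hyp_pos w h i) - (\<Union>j\<in>{1..n} - \<sigma>. hyp_pos w h j)"
    by (auto simp: sg_def hyp_pos_def)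
  then show "\<sigma> \<in> hcode n w h" unfolding hcode_def by blast
qed

lemma sg_sub: "sg x \<subseteq> {1..n}" by (auto simp: sg_def)

lemma closure_cell:
  assumes "p \<in> closure (cell \<sigma>)" "g \<in> {1..n}"
  shows "(g \<in> \<sigma> \<longrightarrow> w g \<bullet> p \<ge> h g) \<and> (g \<notin> \<sigma> \<longrightarrow> w g \<bullet> p \<le> h g)"
proof -
  have c1: "closed {x. w g \<bullet> x \<ge> h g}" by (simp add: closed_halfspace_ge)
  have c2: "closed {x. w g \<bullet> x \<le> h g}" by (simp add: closed_halfspace_le)
  show ?thesis
  proof (intro conjI impI)
    assume "g \<in> \<sigma>"
    then have "cell \<sigma> \<subseteq> {x. w g \<bullet> x \<ge> h g}" by (auto simp: cell_def sg_def)
    then show "w g \<bullet> p \<ge> h g" using closure_minimal[OF _ c1] assms(1) by blast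
  next
    assume "g \<notin> \<sigma>"
    then have "cell \<sigma> \<subseteq> {x. w g \<bullet> x \<le> h g}" using assms(2) by (auto simp: cell_def sg_def)
    then show "w g \<bullet> p \<le> h g" using closure_minimal[OF _ c2] assms(1) by blast
  qed
qed

lemma closure_cell_strict:
  assumes "p \<in> closure (cell \<sigma>)" "g \<in> {1..n}" "w g \<bullet> p \<noteq> h g"
  shows "g \<in> \<sigma> \<longleftrightarrow> w g \<bullet> p > h g"
  using closure_cell[OF assms(1,2)] assms(3) by force

lemma closure_cell_sub:
  assumes "p \<in> closure (cell \<sigma>)" shows "\<sigma> \<subseteq> {1..n}"
proof -
  have "cell \<sigma> \<noteq> {}" using assms by auto
  then show ?thesis using sg_sub by (auto simp: cell_def)
qed

lemma local_cell:
  assumes "\<tau> \<subseteq> {1..n}" "\<forall>g\<in>{1..n}. w g \<bullet> p \<noteq> h g \<longrightarrow> (g \<in> \<tau> \<longleftrightarrow> w g \<bullet> p > h g)"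
   "\<forall>g\<in>{1..n}. w g \<bullet> p = h g \<longrightarrow> (g \<in> \<tau> \<longrightarrow> w g \<bullet> d > 0) \<and> (g \<notin> \<tau> \<longrightarrow> w g \<bullet> d \<le> 0)"
  shows "eventually (\<lambda>t. sg (p + t *\<^sub>R d) = \<tau>) (at_right 0)"
proof -
  have "\<forall>g\<in>{1..n}. eventually (\<lambda>t. g \<in> \<tau> \<longleftrightarrow> w g \<bullet> (p + t *\<^sub>R d) > h g) (at_right 0)"
  proof
    fix g assume g: "g \<in> {1..n}"
    have val: "w g \<bullet> (p + t *\<^sub>R d) = w g \<bullet> p + t * (w g \<bullet> d)" for t
      by (simp add: inner_add_right)
    show "eventually (\<lambda>t. g \<in> \<tau> \<longleftrightarrow> w g \<bullet> (p + t *\<^sub>R d) > h g) (at_right 0)"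
    proof (cases "w g \<bullet> p = h g")
      case True
      show ?thesis using eventually_at_right_less[of "0::real"]
      proof eventually_elim
        case (elim t)
        then show ?case using assms(3) g True by (auto simp: val zero_less_mult_iff)
      qed
    next
      case False
      have lim: "((\<lambda>t. w g \<bullet> p + t * (w g \<bullet> d)) \<longlongrightarrow> w g \<bullet> p + 0 * (w g \<bullet> d)) (at_right (0::real))"
        by (intro tendsto_intros)
      show ?thesis
      proof (cases "w g \<bullet> p > h g")
        case True
        have "eventually (\<lambda>t. w g \<bullet> p + t * (w g \<bullet> d) > h g) (at_right 0)"
          using order_tendstoD(1)[OF lim] True by simp
        then show ?thesis
        proof eventually_elim
          case (elim t) then show ?case using assms(2) g True by (auto simp: val)
        qed
      next
        case F2: False
        then have lt: "w g \<bullet> p < h g" using False by simp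
        have "eventually (\<lambda>t. w g \<bullet> p + t * (w g \<bullet> d) < h g) (at_right 0)"
          using order_tendstoD(2)[OF lim] lt by simp
        then show ?thesis
        proof eventually_elim
          case (elim t) then show ?case using assms(2) g False F2 by (auto simp: val)
        qed
      qed
    qed
  qed
  then have "eventually (\<lambda>t. \<forall>g\<in>{1..n}. g \<in> \<tau> \<longleftrightarrow> w g \<bullet> (p + t *\<^sub>R d) > h g) (at_right 0)"
    by (intro eventually_ball_finite) auto
  then show ?thesis
  proof eventually_elim
    case (elim t)
    then show ?case using assms(1) unfolding sg_def by auto
  qed
qed

end


context arr begin


lemma closest:
  assumes "\<sigma> \<in> range sg"
  obtains p where "p \<in> closure (cell \<sigma>)" "norm p = D \<sigma>"
proof -
  have ne: "closure (cell \<sigma>) \<noteq> {}" using assms by (auto simp: cell_def)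
  obtain x where x: "x \<in> closure (cell \<sigma>)" "infdist 0 (closure (cell \<sigma>)) = dist 0 x"
    using infdist_attains_inf[OF closed_closure ne] by metis
  have "infdist 0 (closure (cell \<sigma>)) = D \<sigma>"
    by (simp add: D_def infdist_eq_setdist)
  with x show ?thesis using that by simp
qed

lemma D_le: "x \<in> cell \<sigma> \<Longrightarrow> D \<sigma> \<le> norm x"
  unfolding D_def using infdist_le[of x "cell \<sigma>" 0] by simp

lemma ev_ex: "eventually P (at_right (0::real)) \<Longrightarrow> \<exists>t. P t"
  using eventually_happens[of P "at_right (0::real)"] by simp

end


locale arrp = arr n w h for n w and h :: "nat \<Rightarrow> real" +
  fixes \<sigma> :: "nat set" and p :: 'a
  assumes pc: "p \<in> closure (cell \<sigma>)" and pn: "norm p = D \<sigma>"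
begin

definition A where "A = {g\<in>{1..n}. w g \<bullet> p = h g}"

lemma A_sub: "A \<subseteq> {1..n}" by (auto simp: A_def)
lemma A_fin: "finite A" using A_sub finite_subset by blast
lemma sig_sub: "\<sigma> \<subseteq> {1..n}" using closure_cell_sub[OF pc] .
lemma strict: "\<forall>g\<in>{1..n}. w g \<bullet> p \<noteq> h g \<longrightarrow> (g \<in> \<sigma> \<longleftrightarrow> w g \<bullet> p > h g)"
  using closure_cell_strict[OF pc] by blast

lemma uex: "\<exists>u. \<forall>g\<in>A. w g \<bullet> u g = 1 \<and> (\<forall>g'\<in>A-{g}. w g' \<bullet> u g = 0)"
proof -
  have ind: "independent (w ` A) \<and> inj_on w A"
    by (rule generic_indep[OF gen A_sub]) (auto simp: A_def)
  have "\<forall>g\<in>A. \<exists>v. w g \<bullet> v = 1 \<and> (\<forall>g'\<in>A-{g}. w g' \<bullet> v = 0)"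
    using dual_vec ind by blast
  then show ?thesis by (rule bchoice)
qed

definition uu where "uu = (SOME u. \<forall>g\<in>A. w g \<bullet> u g = 1 \<and> (\<forall>g'\<in>A-{g}. w g' \<bullet> u g = 0))"

lemma uu: "g \<in> A \<Longrightarrow> g' \<in> A \<Longrightarrow> w g' \<bullet> uu g = (if g' = g then 1 else 0)"
  using someI_ex[OF uex] unfolding uu_def[symmetric] by auto

definition s :: "nat \<Rightarrow> real" where "s g = (if g \<in> \<sigma> then 1 else -1)"
definition z where "z = (\<Sum>g\<in>A. s g *\<^sub>R uu g)"
definition ov where "ov g = (- s g) *\<^sub>R uu g"

lemma wz: "g' \<in> A \<Longrightarrow> w g' \<bullet> z = s g'"
proof -
  assume g': "g' \<in> A"
  have "w g' \<bullet> z = (\<Sum>g\<in>A. s g * (w g' \<bullet> uu g))" by (simp add: z_def inner_sum_right)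
  also have "\<dots> = (\<Sum>g\<in>A. if g = g' then s g else 0)"
    by (rule sum.cong) (auto simp: uu g')
  also have "\<dots> = s g'" using g' A_fin by simp
  finally show ?thesis .
qed

lemma wo: "g \<in> A \<Longrightarrow> g' \<in> A \<Longrightarrow> w g' \<bullet> ov g = (if g' = g then - s g else 0)"
  by (simp add: ov_def uu)

lemma s_sq: "s g * s g = 1" by (simp add: s_def)

lemma FO:
  assumes "\<forall>g\<in>A. (g \<in> \<sigma> \<longrightarrow> w g \<bullet> d > 0) \<and> (g \<notin> \<sigma> \<longrightarrow> w g \<bullet> d \<le> 0)"
  shows "0 \<le> p \<bullet> d"
proof -
  have ev: "eventually (\<lambda>t. sg (p + t *\<^sub>R d) = \<sigma>) (at_right 0)"
    by (rule local_cell[OF sig_sub strict]) (use assms in \<open>auto simp: A_def\<close>)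
  have "eventually (\<lambda>t. 0 \<le> 2*t*(p \<bullet> d) + t^2*(d \<bullet> d)) (at_right 0)"
    using ev
  proof eventually_elim
    case (elim t)
    then have "p + t *\<^sub>R d \<in> cell \<sigma>" by (simp add: cell_def)
    then have "D \<sigma> \<le> norm (p + t *\<^sub>R d)" by (rule D_le)
    then have "norm p \<le> norm (p + t *\<^sub>R d)" using pn by simp
    then have "p \<bullet> p \<le> (p + t *\<^sub>R d) \<bullet> (p + t *\<^sub>R d)"
      by (simp add: norm_le)
    then show ?case by (simp add: inner_add_left inner_add_right power2_eq_square inner_commute algebra_simps)
  qed
  then show ?thesis by (rule fo_limit)
qed

lemma wd: "g' \<in> A \<Longrightarrow> w g' \<bullet> (a *\<^sub>R ov g + b *\<^sub>R v + c *\<^sub>R z) = a * (w g' \<bullet> ov g) + b * (w g' \<bullet> v) + c * s g'"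
  by (simp add: inner_add_right wz)

lemma ov_neg: assumes g: "g \<in> A" shows "p \<bullet> ov g \<le> 0"
proof -
  have "0 \<le> - (p \<bullet> ov g) + e * (p \<bullet> z)" if e: "e > 0" for e
  proof -
    have "0 \<le> p \<bullet> ((-1) *\<^sub>R ov g + 0 *\<^sub>R p + e *\<^sub>R z)"
    proof (rule FO, intro ballI)
      fix g' assume g': "g' \<in> A"
      have val: "w g' \<bullet> ((-1) *\<^sub>R ov g + 0 *\<^sub>R p + e *\<^sub>R z) = (if g' = g then s g else 0) + e * s g'"
        using g g' by (simp only: wd) (simp add: wo)
      show "(g' \<in> \<sigma> \<longrightarrow> 0 < w g' \<bullet> ((-1) *\<^sub>R ov g + 0 *\<^sub>R p + e *\<^sub>R z)) \<and>
            (g' \<notin> \<sigma> \<longrightarrow> w g' \<bullet> ((-1) *\<^sub>R ov g + 0 *\<^sub>R p + e *\<^sub>R z) \<le> 0)"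
        unfolding val using e by (auto simp: s_def)
    qed
    then show ?thesis by (simp add: inner_add_right inner_diff_right)
  qed
  then have "0 \<le> - (p \<bullet> ov g)" by (rule lin_limit)
  then show ?thesis by simp
qed

lemma v_orth: assumes v: "\<forall>g\<in>A. w g \<bullet> v = 0" shows "p \<bullet> v = 0"
proof -
  have key: "0 \<le> b * (p \<bullet> v) + e * (p \<bullet> z)" if e: "e > 0" and b: "b = 1 \<or> b = -1" for e b
  proof -
    have "0 \<le> p \<bullet> (0 *\<^sub>R ov 0 + b *\<^sub>R v + e *\<^sub>R z)"
    proof (rule FO, intro ballI conjI impI)
      fix g' assume g': "g' \<in> A"
      show "0 < w g' \<bullet> (0 *\<^sub>R ov 0 + b *\<^sub>R v + e *\<^sub>R z)" if "g' \<in> \<sigma>"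
        using that e v g' by (simp only: wd) (simp add: s_def)
      show "w g' \<bullet> (0 *\<^sub>R ov 0 + b *\<^sub>R v + e *\<^sub>R z) \<le> 0" if "g' \<notin> \<sigma>"
        using that e v g' by (simp only: wd) (simp add: s_def)
    qed
    then show ?thesis by (simp add: inner_add_right)
  qed
  have h1: "\<And>e. e > 0 \<Longrightarrow> 0 \<le> p \<bullet> v + e * (p \<bullet> z)"
    using key[of _ 1] by auto
  have h2: "\<And>e. e > 0 \<Longrightarrow> 0 \<le> - (p \<bullet> v) + e * (p \<bullet> z)"
    using key[of _ "-1"] by auto
  have "0 \<le> (p \<bullet> v)" "0 \<le> - (p \<bullet> v)"
    using lin_limit[OF h1] lin_limit[OF h2] by auto
  then show ?thesis by simp
qed

lemma flip_ev:
  assumes g: "g \<in> A" and e: "0 < e" "e < 1"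
  shows "eventually (\<lambda>t. sg (p + t *\<^sub>R (ov g + e *\<^sub>R z)) = flp g \<sigma>) (at_right 0)"
proof (rule local_cell)
  show "flp g \<sigma> \<subseteq> {1..n}" using sig_sub g A_sub by (auto simp: flp_def)
  show "\<forall>g'\<in>{1..n}. w g' \<bullet> p \<noteq> h g' \<longrightarrow> (g' \<in> flp g \<sigma>) = (h g' < w g' \<bullet> p)"
    using strict g by (auto simp: flp_def A_def)
  show "\<forall>g'\<in>{1..n}. w g' \<bullet> p = h g' \<longrightarrow>
        (g' \<in> flp g \<sigma> \<longrightarrow> 0 < w g' \<bullet> (ov g + e *\<^sub>R z)) \<and> (g' \<notin> flp g \<sigma> \<longrightarrow> w g' \<bullet> (ov g + e *\<^sub>R z) \<le> 0)"
  proof (intro ballI impI)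
    fix g' assume "g' \<in> {1..n}" "w g' \<bullet> p = h g'"
    then have g': "g' \<in> A" by (simp add: A_def)
    have val: "w g' \<bullet> (ov g + e *\<^sub>R z) = (if g' = g then - s g else 0) + e * s g'"
      using g g' by (simp add: inner_add_right wz wo)
    show "(g' \<in> flp g \<sigma> \<longrightarrow> 0 < w g' \<bullet> (ov g + e *\<^sub>R z)) \<and> (g' \<notin> flp g \<sigma> \<longrightarrow> w g' \<bullet> (ov g + e *\<^sub>R z) \<le> 0)"
      unfolding val using e by (auto simp: flp_def s_def)
  qed
qed

lemma flip_in: assumes "g \<in> A" shows "flp g \<sigma> \<in> range sg"
proof -
  have "eventually (\<lambda>t. sg (p + t *\<^sub>R (ov g + (1/2) *\<^sub>R z)) = flp g \<sigma>) (at_right 0)"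
    by (rule flip_ev[OF assms]) simp_all
  then obtain t where "sg (p + t *\<^sub>R (ov g + (1/2) *\<^sub>R z)) = flp g \<sigma>"
    using ev_ex by blast
  then show ?thesis by (metis rangeI)
qed

lemma flip_weak: assumes g: "g \<in> A" shows "D (flp g \<sigma>) \<le> D \<sigma>"
proof -
  define d where "d = ov g + (1/2) *\<^sub>R z"
  have ev0: "eventually (\<lambda>t. sg (p + t *\<^sub>R d) = flp g \<sigma>) (at_right 0)"
    unfolding d_def by (rule flip_ev[OF g]) simp_all
  have "eventually (\<lambda>t. D (flp g \<sigma>) \<le> norm (p + t *\<^sub>R d)) (at_right 0)"
    using ev0
  proof eventually_elim
    case (elim t) then show ?case by (intro D_le) (simp add: cell_def)
  qed
  moreover have "((\<lambda>t. norm (p + t *\<^sub>R d)) \<longlongrightarrow> norm (p + 0 *\<^sub>R d)) (at_right (0::real))"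
    by (intro tendsto_intros)
  ultimately have "D (flp g \<sigma>) \<le> norm (p + 0 *\<^sub>R d)"
    using tendsto_lowerbound by (metis trivial_limit_at_right_real)
  then show ?thesis using pn by simp
qed

lemma flip_strict: assumes g: "g \<in> A" and neg: "p \<bullet> ov g < 0" shows "D (flp g \<sigma>) < D \<sigma>"
proof -
  have l1: "((\<lambda>e. p \<bullet> ov g + e * (p \<bullet> z)) \<longlongrightarrow> p \<bullet> ov g + 0 * (p \<bullet> z)) (at_right (0::real))"
    by (intro tendsto_intros)
  have l2: "((\<lambda>e::real. e) \<longlongrightarrow> 0) (at_right (0::real))"
    by (intro tendsto_intros)
  have "eventually (\<lambda>e. 0 < e \<and> e < 1 \<and> p \<bullet> ov g + e * (p \<bullet> z) < 0) (at_right (0::real))"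
    using eventually_conj[OF eventually_at_right_less[of "0::real"] eventually_conj[OF order_tendstoD(2)[OF l2, of 1] order_tendstoD(2)[OF l1, of 0]]] neg
    by simp
  then obtain e where e: "0 < e" "e < 1" "p \<bullet> ov g + e * (p \<bullet> z) < 0"
    using ev_ex by blast
  define d where "d = ov g + e *\<^sub>R z"
  have pd: "p \<bullet> d < 0" using e by (simp add: d_def inner_add_right)
  have l3: "((\<lambda>t. 2 * (p \<bullet> d) + t * (d \<bullet> d)) \<longlongrightarrow> 2 * (p \<bullet> d) + 0 * (d \<bullet> d)) (at_right (0::real))"
    by (intro tendsto_intros)
  have "eventually (\<lambda>t. 0 < t \<and> 2 * (p \<bullet> d) + t * (d \<bullet> d) < 0 \<and> sg (p + t *\<^sub>R d) = flp g \<sigma>) (at_right 0)"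
    using eventually_conj[OF eventually_at_right_less[of "0::real"] eventually_conj[OF order_tendstoD(2)[OF l3, of 0] flip_ev[OF g e(1,2)]]] pd
    unfolding d_def[symmetric] by simp
  then obtain t where t: "0 < t" "2 * (p \<bullet> d) + t * (d \<bullet> d) < 0" "sg (p + t *\<^sub>R d) = flp g \<sigma>"
    using ev_ex by blast
  have "(p + t *\<^sub>R d) \<bullet> (p + t *\<^sub>R d) = p \<bullet> p + t * (2 * (p \<bullet> d) + t * (d \<bullet> d))"
    by (simp add: inner_add_left inner_add_right inner_commute algebra_simps)
  also have "\<dots> < p \<bullet> p" using t by (simp add: mult_pos_neg)
  finally have "norm (p + t *\<^sub>R d) < norm p" by (simp add: norm_lt)
  moreover have "D (flp g \<sigma>) \<le> norm (p + t *\<^sub>R d)" using t(3) by (intro D_le) (simp add: cell_def)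
  ultimately show ?thesis using pn by simp
qed

end


lemma sgn_aux: fixes a b :: real assumes "a * b < 0" "b \<le> 0" shows "b < 0 \<and> a > 0"
  using assms by (auto simp: mult_less_0_iff)

context arrp begin

lemma main_p:
  assumes tr: "\<tau> \<in> range sg" and ne: "\<tau> \<noteq> \<sigma>" and le: "D \<tau> < D \<sigma> \<or> (D \<tau> = D \<sigma> \<and> card \<tau> \<le> card \<sigma>)"
  shows "\<exists>e. (e \<in> \<sigma> \<longleftrightarrow> e \<notin> \<tau>) \<and> flp e \<sigma> \<in> range sg \<and>
           (D (flp e \<sigma>) < D \<sigma> \<or> (D (flp e \<sigma>) = D \<sigma> \<and> card (flp e \<sigma>) < card \<sigma>))"
proof -
  obtain q where qc: "q \<in> closure (cell \<tau>)" and qn: "norm q = D \<tau>" using closest[OF tr] by blast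
  have qp: "norm q \<le> norm p" using le qn pn by auto
  show ?thesis
  proof (cases "q = p")
    case False
    define u0 where "u0 = q - p"
    have u0: "u0 \<noteq> 0" using False by (simp add: u0_def)
    have "q \<bullet> q \<le> p \<bullet> p" using qp by (simp add: norm_le)
    moreover have "q \<bullet> q = p \<bullet> p + 2 * (p \<bullet> u0) + u0 \<bullet> u0"
      by (simp add: u0_def inner_diff_left inner_diff_right inner_commute)
    moreover have "u0 \<bullet> u0 > 0" using u0 by simp
    ultimately have pu0: "p \<bullet> u0 < 0" by linarith
    define v where "v = u0 - (\<Sum>g\<in>A. (w g \<bullet> u0) *\<^sub>R uu g)"
    have wv: "\<forall>g'\<in>A. w g' \<bullet> v = 0"
    proof
      fix g' assume g': "g' \<in> A"
      have "w g' \<bullet> (\<Sum>g\<in>A. (w g \<bullet> u0) *\<^sub>R uu g) = (\<Sum>g\<in>A. (w g \<bullet> u0) * (w g' \<bullet> uu g))"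
        by (simp add: inner_sum_right)
      also have "\<dots> = (\<Sum>g\<in>A. if g = g' then w g \<bullet> u0 else 0)"
        by (rule sum.cong) (auto simp: uu g')
      also have "\<dots> = w g' \<bullet> u0" using g' A_fin by simp
      finally show "w g' \<bullet> v = 0" by (simp add: v_def inner_diff_right)
    qed
    have "p \<bullet> v = 0" using v_orth[OF wv] .
    then have "p \<bullet> u0 = (\<Sum>g\<in>A. (w g \<bullet> u0) * (p \<bullet> uu g))"
      by (simp add: v_def inner_diff_right inner_sum_right)
    also have "\<dots> = (\<Sum>g\<in>A. (w g \<bullet> u0) * (- s g) * (p \<bullet> ov g))"
    proof (rule sum.cong)
      fix g assume "g \<in> A"
      have "p \<bullet> ov g = - s g * (p \<bullet> uu g)" by (simp add: ov_def)
      then have "- s g * (p \<bullet> ov g) = (s g * s g) * (p \<bullet> uu g)" by simp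
      then show "(w g \<bullet> u0) * (p \<bullet> uu g) = (w g \<bullet> u0) * (- s g) * (p \<bullet> ov g)"
        by (simp add: s_sq) (metis mult.assoc mult_minus_right)
    qed simp
    finally have "(\<Sum>g\<in>A. (w g \<bullet> u0) * (- s g) * (p \<bullet> ov g)) < 0" using pu0 by simp
    then obtain g where g: "g \<in> A" and tneg: "(w g \<bullet> u0) * (- s g) * (p \<bullet> ov g) < 0"
      by (metis (no_types, lifting) not_less sum_nonneg)
    have po: "p \<bullet> ov g \<le> 0" using ov_neg[OF g] .
    have po': "p \<bullet> ov g < 0" and ws: "(w g \<bullet> u0) * (- s g) > 0"
      using sgn_aux[OF tneg po] by auto
    have gn: "g \<in> {1..n}" and hp: "w g \<bullet> p = h g" using g by (auto simp: A_def)
    have cl: "(g \<in> \<tau> \<longrightarrow> w g \<bullet> q \<ge> h g) \<and> (g \<notin> \<tau> \<longrightarrow> w g \<bullet> q \<le> h g)"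
      using closure_cell[OF qc gn] .
    have wq: "w g \<bullet> q = h g + w g \<bullet> u0" using hp by (simp add: u0_def inner_diff_right)
    have diff: "g \<in> \<sigma> \<longleftrightarrow> g \<notin> \<tau>"
      using ws cl wq by (auto simp: s_def mult_less_0_iff zero_less_mult_iff split: if_splits)
    show ?thesis using diff flip_in[OF g] flip_strict[OF g po'] by blast
  next
    case True
    have Deq: "D \<tau> = D \<sigma>" using True qn pn by simp
    then have ct: "card \<tau> \<le> card \<sigma>" using le by simp
    have tsub: "\<tau> \<subseteq> {1..n}" using closure_cell_sub[OF qc] .
    have agree: "g \<in> \<sigma> \<longleftrightarrow> g \<in> \<tau>" if "g \<in> {1..n}" "g \<notin> A" for g
    proof -
      have "w g \<bullet> p \<noteq> h g" using that by (simp add: A_def)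
      then show ?thesis using closure_cell_strict[OF pc that(1)] closure_cell_strict[OF qc that(1)] True
        by simp
    qed
    have "\<not> \<sigma> \<subseteq> \<tau>"
    proof
      assume "\<sigma> \<subseteq> \<tau>"
      moreover have "finite \<tau>" using tsub finite_subset by blast
      ultimately have "\<sigma> = \<tau>" using ct card_subset_eq card_mono by (metis le_antisym)
      then show False using ne by simp
    qed
    then obtain f where f: "f \<in> \<sigma>" "f \<notin> \<tau>" by blast
    have fA: "f \<in> A" using f agree sig_sub by blast
    have fl: "flp f \<sigma> = \<sigma> - {f}" using f by (simp add: flp_def)
    have "card (flp f \<sigma>) < card \<sigma>"
      unfolding fl using f sig_sub finite_subset
      by (metis card_Diff1_less finite_atLeastAtMost)
    then show ?thesis using f flip_in[OF fA] flip_weak[OF fA] by force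
  qed
qed

end

context arr begin

lemma main:
  assumes sr: "\<sigma> \<in> range sg" and tr: "\<tau> \<in> range sg" and ne: "\<tau> \<noteq> \<sigma>"
    and le: "D \<tau> < D \<sigma> \<or> (D \<tau> = D \<sigma> \<and> card \<tau> \<le> card \<sigma>)"
  shows "\<exists>e. (e \<in> \<sigma> \<longleftrightarrow> e \<notin> \<tau>) \<and> flp e \<sigma> \<in> range sg \<and>
           (D (flp e \<sigma>) < D \<sigma> \<or> (D (flp e \<sigma>) = D \<sigma> \<and> card (flp e \<sigma>) < card \<sigma>))"
proof -
  obtain p where "p \<in> closure (cell \<sigma>)" "norm p = D \<sigma>" using closest[OF sr] by blast
  then interpret arrp n w h \<sigma> p by unfold_locales
  show ?thesis using main_p[OF tr ne le] .
qed

end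
datatype lk = LK real nat

instantiation lk :: linorder
begin
fun less_eq_lk :: "lk \<Rightarrow> lk \<Rightarrow> bool" where
  "less_eq_lk (LK a b) (LK c d) = (a < c \<or> a = c \<and> b \<le> d)"
fun less_lk :: "lk \<Rightarrow> lk \<Rightarrow> bool" where
  "less_lk (LK a b) (LK c d) = (a < c \<or> a = c \<and> b < d)"
instance
proof
  fix x y z :: lk
  show "(x < y) = (x \<le> y \<and> \<not> y \<le> x)" by (cases x; cases y) auto
  show "x \<le> x" by (cases x) auto
  show "x \<le> y \<Longrightarrow> y \<le> z \<Longrightarrow> x \<le> z" by (cases x; cases y; cases z) auto
  show "x \<le> y \<Longrightarrow> y \<le> x \<Longrightarrow> x = y" by (cases x; cases y) auto
  show "x \<le> y \<or> y \<le> x" by (cases x; cases y) auto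
qed
end

context arr begin

definition key :: "nat set \<Rightarrow> lk" where "key \<sigma> = LK (D \<sigma>) (card \<sigma>)"

lemma shellable_arr: "shellable (polar_complex n (hcode n w h))"
proof -
  let ?C = "range sg"
  have C: "?C \<subseteq> Pow {1..n}" using sg_sub by blast
  have ne: "?C \<noteq> {}" by blast
  have fC: "finite ?C" using C finite_subset by (metis finite_Pow_iff finite_atLeastAtMost)
  obtain xs where xs: "distinct xs" "set xs = ?C" using finite_distinct_list[OF fC] by blast
  define ys where "ys = sort_key key xs"
  have dys: "distinct ys" and sys: "set ys = ?C" using xs by (simp_all add: ys_def)
  have so: "sorted (map key ys)" by (simp add: ys_def)
  have H: "\<exists>k<i. \<exists>e. ys ! k = flp e (ys ! i) \<and> (e \<in> ys ! i \<longleftrightarrow> e \<notin> ys ! j)"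
    if ji: "j < i" "i < length ys" for i j
  proof -
    have si: "ys ! i \<in> ?C" and sj: "ys ! j \<in> ?C" using ji sys nth_mem by (metis less_trans)+
    have nej: "ys ! j \<noteq> ys ! i" using dys ji nth_eq_iff_index_eq by fastforce
    have "key (ys ! j) \<le> key (ys ! i)"
      using sorted_nth_mono[OF so, of j i] ji by simp
    then have le: "D (ys ! j) < D (ys ! i) \<or> (D (ys ! j) = D (ys ! i) \<and> card (ys ! j) \<le> card (ys ! i))"
      by (auto simp: key_def)
    obtain e where e: "(e \<in> ys ! i \<longleftrightarrow> e \<notin> ys ! j)" "flp e (ys ! i) \<in> ?C"
      "D (flp e (ys ! i)) < D (ys ! i) \<or> (D (flp e (ys ! i)) = D (ys ! i) \<and> card (flp e (ys ! i)) < card (ys ! i))"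
      using main[OF si sj nej le] by blast
    have kl: "key (flp e (ys ! i)) < key (ys ! i)" using e(3) by (auto simp: key_def)
    obtain k where k: "k < length ys" "ys ! k = flp e (ys ! i)"
      using e(2) sys by (metis in_set_conv_nth)
    have "k < i"
    proof (rule ccontr)
      assume "\<not> k < i"
      then have "key (ys ! i) \<le> key (ys ! k)" using sorted_nth_mono[OF so, of i k] k(1) by simp
      then show False using kl k(2) by simp
    qed
    then show ?thesis using k e(1) by blast
  qed
  show ?thesis unfolding hcode_eq by (rule shell_comb[OF C ne dys sys H]) auto
qed

end

theorem lemma7p2:
  fixes n :: nat and w :: "nat \<Rightarrow> 'a::euclidean_space" and h :: "nat \<Rightarrow> real"
  assumes "\<forall>i\<in>{1..n}. w i \<noteq> 0"
    and "generic_intersections n w h"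
  shows "shellable (polar_complex n (hcode n w h))"
proof -
  interpret arr n w h using assms(2) by unfold_locales
  show ?thesis by (rule shellable_arr)
qed

end
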